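(* Let $t>0$. For every integer $m\geq1$ and every $y\in\mathbb{C}$ with $|y|<1$, the series below converges and $$2^{m+1}\sum_{j\geq m+1}L_{j-m-1}^{(m+1)}(2jt)\,(e^{-t}y)^j=\frac{(K_{2t}(y))^2-1}{t(K_{2t}(y))^2+(2-t)}\,\big[K_{2t}(y)-1\big]^m.$$
   Context: Pochhammer symbol $(a)_0=1$, $(a)_k=a(a+1)\cdots(a+k-1)$. Laguerre polynomials: $L_n^{(a)}(x):=\frac{1}{n!}\sum_{j=0}^n\frac{(-n)_j}{j!}(a+j+1)_{n-j}x^j$. For $t>0$, $\xi_{2t}(Z):=\frac{Z-1}{Z+1}e^{tZ}$. The function $K_{2t}$ on the open unit disc $\mathbb{D}$ is the Herglotz transform $K_{2t}(y)=\int_{\mathbb{T}}\frac{w+y}{w-y}\eta_{2t}(dw)$ of the spectral distribution $\eta_{2t}$ of the free unitary Brownian motion at time $2t$; it is known (Biane) that $K_{2t}(y)=1+2\sum_{n\ge1}\frac1n e^{-nt}L^{(1)}_{n-1}(2nt)y^n$, that $K_{2t}$ extends continuously to $\overline{\mathbb{D}}$, and that $K_{2t}$ is the compositional inverse of the restriction of $\xi_{2t}$ to the Jordan domain $\Gamma_{2t}=\{Z:\Re Z>0,\ \xi_{2t}(Z)\in\mathbb{D}\}$ (component containing $1$), which $\xi_{2t}$ maps bijectively onto $\mathbb{D}$; in particular $\xi_{2t}(K_{2t}(y))=y$, $\Re K_{2t}(y)>0$, $K_{2t}(0)=1$. *)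

theory Defs
  imports "HOL-Analysis.Analysis"
begin

definition laguerre :: "nat \<Rightarrow> real \<Rightarrow> real \<Rightarrow> real" where
  "laguerre n a x =
     (1 / fact n) * (\<Sum>j=0..n. pochhammer (- real n) j / fact j
                                * pochhammer (a + real j + 1) (n - j) * x ^ j)"

text \<open>K_{2t}(y) = 1 + 2 sum_{n>=1} (1/n) e^{-nt} L^(1)_{n-1}(2nt) y^n
  (Biane's power series for the Herglotz transform of the free unitary
  Brownian motion distribution at time 2t), for |y| < 1.\<close>
definition K2t :: "real \<Rightarrow> complex \<Rightarrow> complex" where
  "K2t t y = 1 + 2 * (\<Sum>n. if n = 0 then 0 else
       of_real (1 / real n * exp (- real n * t) * laguerre (n - 1) 1 (2 * real n * t)) * y ^ n)"

end

theory Submission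
  imports Defs "HOL-Complex_Analysis.Complex_Analysis"
begin
lemma fls_residue_fps: "fls_residue (fps_to_fls (F::complex fps)) = 0"
  by simp

lemma res_inv_pow:
  fixes A :: "complex fps"
  assumes A0: "fps_nth A 0 = 0" and A1: "fps_nth A 1 \<noteq> 0"
    and s1: "s \<ge> 1"
  shows "fls_residue (inverse (fps_to_fls A) ^ s * fls_deriv (fps_to_fls A)) = (if s = 1 then 1 else 0)"
proof -
  define \<alpha> where "\<alpha> = fps_to_fls A"
  have sd: "subdegree A = 1"
    using A0 A1 by (intro subdegreeI) auto
  hence sub: "fls_subdegree \<alpha> = 1" by (simp add: \<alpha>_def fls_subdegree_fls_to_fps)
  have anz: "\<alpha> \<noteq> 0" using sub by auto
  show ?thesis
  proof (cases "s = 1")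
    case True
    have "fls_residue (inverse \<alpha> * fls_deriv \<alpha>) = of_int (fls_subdegree \<alpha>)"
      unfolding fls_inverse_def'
      by (rule fls_residue_deriv_times_lr_inverse_eq_subdegree(4)) (use nth_fls_subdegree_nonzero[OF anz] in auto)
    thus ?thesis using True sub by (simp add: \<alpha>_def)
  next
    case False
    with s1 have s2: "s \<ge> 2" by auto
    have d: "fls_deriv (inverse \<alpha>) = - inverse \<alpha> * fls_deriv \<alpha> * inverse \<alpha>"
      by (rule fls_inverse_deriv_divring)
    have "fls_deriv (inverse \<alpha> ^ (s-1)) = of_nat (s-1) * inverse \<alpha> ^ (s-2) * fls_deriv (inverse \<alpha>)"
      by (simp add: fls_deriv_power diff_diff_add numeral_2_eq_2)
    also have "\<dots> = - of_nat (s-1) * (inverse \<alpha> ^ (s-2) * inverse \<alpha> * inverse \<alpha>) * fls_deriv \<alpha>"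
      by (simp add: d algebra_simps)
    also have "inverse \<alpha> ^ (s-2) * inverse \<alpha> * inverse \<alpha> = inverse \<alpha> ^ s"
      using s2 by (metis (no_types, lifting) Suc_diff_Suc add_2_eq_Suc' le_add_diff_inverse2 mult.commute numeral_2_eq_2 power_Suc)
    finally have eq: "fls_deriv (inverse \<alpha> ^ (s-1)) = - of_nat (s-1) * (inverse \<alpha> ^ s * fls_deriv \<alpha>)"
      by simp
    have "fls_deriv (fls_const (- 1 / of_nat (s-1)) * inverse \<alpha> ^ (s-1)) = fls_const (- 1 / of_nat (s-1)) * fls_deriv (inverse \<alpha> ^ (s-1))"
      by (simp add: fls_deriv_mult_const_left)
    also have "\<dots> = (fls_const (- 1 / of_nat (s-1)) * - of_nat (s-1)) * (inverse \<alpha> ^ s * fls_deriv \<alpha>)"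
      by (subst eq) (simp add: algebra_simps)
    also have "fls_const (- 1 / of_nat (s-1)) * - of_nat (s-1) = (1 :: complex fls)"
    proof -
      have "(of_nat (s-1) :: complex) \<noteq> 0" using s2 by simp
      have e1: "- of_nat (s-1) = fls_const (- of_nat (s-1) :: complex)"
        by (simp add: fls_of_nat)
      have "fls_const (- 1 / of_nat (s-1)) * - of_nat (s-1) = fls_const ((- 1 / of_nat (s-1)) * (- of_nat (s-1)) :: complex)"
        unfolding e1 by (rule fls_const_mult_const)
      also have "(- 1 / of_nat (s-1)) * (- of_nat (s-1)) = (1::complex)" using \<open>(of_nat (s-1) :: complex) \<noteq> 0\<close> by (simp del: of_nat_diff)
      finally show ?thesis by simp
    qed
    finally have "inverse \<alpha> ^ s * fls_deriv \<alpha> = fls_deriv (fls_const (- 1 / of_nat (s-1)) * inverse \<alpha> ^ (s-1))"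
      by simp
    thus ?thesis using False
      by (simp only: fls_residue_deriv \<alpha>_def) simp
  qed
qed

lemma ring_aux: "(c + a * r) * i * d = c * (i * d) + r * (a * i) * (d::'a::comm_ring)"
  by (simp add: algebra_simps)

lemma fps_decomp1: "P = fps_const (fps_nth P 0) + fps_X * fps_shift 1 (P :: complex fps)"
  by (rule fps_ext) (auto simp: fps_X_mult_nth)

lemma KL:
  fixes A P :: "complex fps"
  assumes A0: "fps_nth A 0 = 0" and A1: "fps_nth A 1 \<noteq> 0" and N1: "N \<ge> 1"
  shows "fls_residue (fps_to_fls (P oo A) * inverse (fps_to_fls A) ^ N * fls_deriv (fps_to_fls A)) = fps_nth P (N - 1)"
  using N1
proof (induction N arbitrary: P rule: dec_induct)
  define \<alpha> where "\<alpha> = fps_to_fls A"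
  have sd: "subdegree A = 1"
    using A0 A1 by (intro subdegreeI) auto
  hence anz: "\<alpha> \<noteq> 0" using A1 unfolding \<alpha>_def by auto
  have comp: "fps_to_fls (P oo A) = fls_const (fps_nth P 0) + \<alpha> * fps_to_fls (fps_shift 1 P oo A)" for P
  proof -
    have "P oo A = (fps_const (fps_nth P 0) + fps_X * fps_shift 1 P) oo A"
      by (subst fps_decomp1[of P]) simp
    also have "\<dots> = fps_const (fps_nth P 0) + A * (fps_shift 1 P oo A)"
      by (simp add: fps_compose_add_distrib fps_const_compose fps_compose_mult_distrib A0 fps_X_fps_compose_startby0)
    finally show ?thesis by (simp add: \<alpha>_def fps_to_fls_plus fls_times_fps_to_fls)
  qed
  {
    case base
    have "fps_to_fls (P oo A) * inverse \<alpha> ^ 1 * fls_deriv \<alpha> =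
          fls_const (fps_nth P 0) * (inverse \<alpha> ^ 1 * fls_deriv \<alpha>) + fps_to_fls (fps_shift 1 P oo A) * (\<alpha> * inverse \<alpha>) * fls_deriv \<alpha>"
      unfolding power_one_right by (subst comp) (rule ring_aux)
    also have "\<dots> = fls_const (fps_nth P 0) * (inverse \<alpha> ^ 1 * fls_deriv \<alpha>) + fps_to_fls ((fps_shift 1 P oo A) * fps_deriv A)"
      using anz by (simp add: \<alpha>_def fls_times_fps_to_fls fls_deriv_fps_to_fls)
    finally have "fps_to_fls (P oo A) * inverse \<alpha> ^ 1 * fls_deriv \<alpha> =
          fls_const (fps_nth P 0) * (inverse \<alpha> ^ 1 * fls_deriv \<alpha>) + fps_to_fls ((fps_shift 1 P oo A) * fps_deriv A)" .
    hence "fls_residue (fps_to_fls (P oo A) * inverse \<alpha> ^ 1 * fls_deriv \<alpha>) = fps_nth P 0 * 1"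
      using res_inv_pow[OF A0 A1, of 1] unfolding \<alpha>_def
      by (simp only: fls_residue_add fls_residue_fls_const_times fls_residue_fps) simp
    thus ?case by (simp add: \<alpha>_def)
  next
    case (step N)
    have "fps_to_fls (P oo A) * inverse \<alpha> ^ Suc N * fls_deriv \<alpha> =
          fls_const (fps_nth P 0) * (inverse \<alpha> ^ Suc N * fls_deriv \<alpha>) + fps_to_fls (fps_shift 1 P oo A) * inverse \<alpha> ^ N * fls_deriv \<alpha>"
    proof -
      have ai: "\<alpha> * inverse \<alpha> ^ Suc N = inverse \<alpha> ^ N"
        using anz by (simp add: power_Suc mult.assoc[symmetric])
      have "fps_to_fls (P oo A) * inverse \<alpha> ^ Suc N * fls_deriv \<alpha> =
          fls_const (fps_nth P 0) * (inverse \<alpha> ^ Suc N * fls_deriv \<alpha>) + fps_to_fls (fps_shift 1 P oo A) * (\<alpha> * inverse \<alpha> ^ Suc N) * fls_deriv \<alpha>"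
        by (subst comp) (rule ring_aux)
      thus ?thesis unfolding ai .
    qed
    hence "fls_residue (fps_to_fls (P oo A) * inverse \<alpha> ^ Suc N * fls_deriv \<alpha>) = fps_nth P 0 * 0 + fps_nth (fps_shift 1 P) (N - 1)"
      using res_inv_pow[OF A0 A1, of "Suc N"] step unfolding \<alpha>_def
      by (simp only: fls_residue_add fls_residue_fls_const_times) simp
    thus ?case using step by (simp add: \<alpha>_def)
  }
qed

lemma field_aux1:
  fixes a p d :: "'a::field"
  assumes "a \<noteq> 0" "p \<noteq> 0"
  shows "inverse (a * inverse p) ^ n * d = p ^ n * inverse a ^ n * d"
  using assms by (simp add: power_mult_distrib)

lemma field_aux2:
  fixes a p d :: "'a::field"
  assumes "a \<noteq> 0" "p \<noteq> 0" "k \<le> n"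
  shows "inverse (a * inverse p) ^ (n+1) * (a ^ k * d * inverse p) = p ^ n * inverse a ^ (n + 1 - k) * d"
proof -
  have e1: "inverse (a * inverse p) ^ (n+1) = p^(n+1) * inverse a ^ (n+1)"
    using assms by (simp add: power_mult_distrib)
  have e2: "inverse a ^ (n+1) = inverse a ^ (n+1-k) * inverse a ^ k"
    using assms by (simp flip: power_add)
  have e3: "inverse a ^ k * a ^ k = 1"
  proof -
    have "inverse a ^ k * a ^ k = (inverse a * a) ^ k" by (simp only: power_mult_distrib)
    thus ?thesis using assms by simp
  qed
  have e4: "p^(n+1) * inverse p = p^n" using assms by simp
  have "p^(n+1) * (inverse a ^ (n+1-k) * inverse a ^ k) * (a ^ k * d * inverse p) =
     (p^(n+1) * inverse p) * inverse a ^ (n+1-k) * (inverse a ^ k * a ^ k) * d"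
    by (simp only: mult_ac)
  also have "\<dots> = p ^ n * inverse a ^ (n + 1 - k) * d"
    by (simp only: e3 e4 mult_1_right)
  finally show ?thesis unfolding e1 e2 .
qed

locale lagr =
  fixes \<phi> :: "complex fps"
  assumes phi0: "fps_nth \<phi> 0 \<noteq> 0"
begin

definition "g = fps_X * inverse \<phi>"
definition "A = fps_inv g"

lemma g0: "fps_nth g 0 = 0" and g1: "fps_nth g 1 \<noteq> 0"
  using phi0 by (simp_all add: g_def)

lemma A0: "fps_nth A 0 = 0"
  by (simp add: A_def fps_inv_def)

lemma PhiA0: "fps_nth (\<phi> oo A) 0 \<noteq> 0" using phi0 by (simp add: fps_compose_nth_0)

lemma PhiA_nz: "\<phi> oo A \<noteq> 0"
proof
  assume "\<phi> oo A = 0"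
  hence "fps_nth (\<phi> oo A) 0 = 0" by simp
  thus False using PhiA0 by simp
qed

lemma A_eq: "A = fps_X * (\<phi> oo A)"
proof -
  have "g oo A = fps_X" unfolding A_def by (rule fps_inv_right[OF g0 g1])
  hence "A * inverse (\<phi> oo A) = fps_X"
    by (simp add: g_def fps_compose_mult_distrib A0 fps_X_fps_compose_startby0 fps_inverse_compose phi0)
  hence "A * (inverse (\<phi> oo A) * (\<phi> oo A)) = fps_X * (\<phi> oo A)" by (simp add: mult.assoc)
  moreover have "inverse (\<phi> oo A) * (\<phi> oo A) = 1" by (rule inverse_mult_eq_1[OF PhiA0])
  ultimately show ?thesis by simp
qed

lemma A1: "fps_nth A 1 = fps_nth \<phi> 0"
  by (subst A_eq) (simp add: fps_compose_nth_0)

lemma A1': "fps_nth A 1 \<noteq> 0" using A1 phi0 by simp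

lemma coeff_setup:
  "fps_nth F n = fls_residue (inverse (fps_to_fls A * inverse (fps_to_fls (\<phi> oo A))) ^ (n+1) * fps_to_fls F)"
proof -
  have X: "fls_X = fps_to_fls A * inverse (fps_to_fls (\<phi> oo A))"
  proof -
    have "fps_to_fls A = fls_X * fps_to_fls (\<phi> oo A)"
      by (subst A_eq) (simp add: fls_times_fps_to_fls)
    moreover have "fps_to_fls (\<phi> oo A) \<noteq> 0" using PhiA_nz by simp
    ultimately show ?thesis by simp
  qed
  have "fps_nth F n = fls_nth (fps_to_fls F) (int n)" by simp
  also have "\<dots> = fls_residue (fls_X_intpow (- int n - 1) * fps_to_fls F)"
    by (rule fls_residue_shift_nth)
  also have "fls_X_intpow (- int n - 1) = inverse (fls_X ^ (n+1) :: complex fls)"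
  proof -
    have "inverse (fls_X ^ (n+1)) = inverse (fls_X_intpow (int (n+1)) :: complex fls)"
      by (simp only: fls_X_power_conv_shift_1)
    also have "\<dots> = fls_X_intpow (- int (n+1))" by (rule fls_inverse_X_intpow)
    also have "- int (n+1) = - int n - 1" by simp
    finally show ?thesis by (rule sym)
  qed
  finally show ?thesis unfolding X by (simp only: power_inverse)
qed

lemma coeff_A:
  assumes "n \<ge> 1"
  shows "of_nat n * fps_nth A n = fps_nth (\<phi> ^ n) (n - 1)"
proof -
  define \<alpha> where "\<alpha> = fps_to_fls A"
  define \<Phi> where "\<Phi> = fps_to_fls (\<phi> oo A)"
  have anz: "\<alpha> \<noteq> 0" using A1' unfolding \<alpha>_def by auto
  have pnz: "\<Phi> \<noteq> 0" using PhiA_nz unfolding \<Phi>_def by simp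
  have "of_nat n * fps_nth A n = fps_nth (fps_deriv A) (n - 1)"
    using assms by (simp add: fps_deriv_nth)
  also have "\<dots> = fls_residue (inverse (\<alpha> * inverse \<Phi>) ^ n * fls_deriv \<alpha>)"
    using assms unfolding coeff_setup \<alpha>_def \<Phi>_def by (simp add: fls_deriv_fps_to_fls)
  also have "\<dots> = fls_residue (\<Phi> ^ n * inverse \<alpha> ^ n * fls_deriv \<alpha>)"
    by (simp only: field_aux1[OF anz pnz])
  also have "\<Phi> ^ n = fps_to_fls ((\<phi> ^ n) oo A)"
    unfolding \<Phi>_def by (simp add: fps_compose_power[OF A0] fls_times_fps_to_fls flip: fps_to_fls_power)
  also have "fls_residue (fps_to_fls ((\<phi> ^ n) oo A) * inverse \<alpha> ^ n * fls_deriv \<alpha>) = fps_nth (\<phi> ^ n) (n - 1)"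
    unfolding \<alpha>_def by (rule KL[OF A0 A1' assms])
  finally show ?thesis .
qed

lemma coeff_B:
  shows "fps_nth (A ^ k * fps_deriv A * inverse (\<phi> oo A)) n = (if k \<le> n then fps_nth (\<phi> ^ n) (n - k) else 0)"
proof (cases "k \<le> n")
  case False
  have eqn: "A ^ k * fps_deriv A * inverse (\<phi> oo A) = fps_X ^ k * ((\<phi> oo A) ^ k * fps_deriv A * inverse (\<phi> oo A))"
  proof -
    have "A^k = fps_X^k * (\<phi> oo A)^k" by (metis A_eq power_mult_distrib)
    thus ?thesis by (simp only: mult.assoc)
  qed
  show ?thesis using False by (subst eqn) (simp add: fps_X_power_mult_nth)
next
  case True
  define \<alpha> where "\<alpha> = fps_to_fls A"
  define \<Phi> where "\<Phi> = fps_to_fls (\<phi> oo A)"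
  have anz: "\<alpha> \<noteq> 0" using A1' unfolding \<alpha>_def by auto
  have pnz: "\<Phi> \<noteq> 0" using PhiA_nz unfolding \<Phi>_def by simp
  have inv: "fps_to_fls (inverse (\<phi> oo A)) = inverse \<Phi>"
    unfolding \<Phi>_def using PhiA0 by (simp add: fls_inverse_fps_to_fls subdegree_eq_0)
  have "fps_nth (A ^ k * fps_deriv A * inverse (\<phi> oo A)) n =
     fls_residue (inverse (\<alpha> * inverse \<Phi>) ^ (n+1) * (\<alpha> ^ k * fls_deriv \<alpha> * inverse \<Phi>))"
    unfolding coeff_setup \<alpha>_def
    by (simp add: fls_times_fps_to_fls fls_deriv_fps_to_fls inv \<Phi>_def flip: fps_to_fls_power)
  also have "\<dots> = fls_residue (\<Phi> ^ n * inverse \<alpha> ^ (n + 1 - k) * fls_deriv \<alpha>)"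
    by (simp only: field_aux2[OF anz pnz True])
  also have "\<Phi> ^ n = fps_to_fls ((\<phi> ^ n) oo A)"
    unfolding \<Phi>_def by (simp add: fps_compose_power[OF A0] fls_times_fps_to_fls flip: fps_to_fls_power)
  also have "fls_residue (fps_to_fls ((\<phi> ^ n) oo A) * inverse \<alpha> ^ (n + 1 - k) * fls_deriv \<alpha>) = fps_nth (\<phi> ^ n) (n + 1 - k - 1)"
    unfolding \<alpha>_def by (rule KL[OF A0 A1']) (use True in simp)
  finally show ?thesis using True by simp
qed

end

lemma poch_neg_nat: "j \<le> n \<Longrightarrow> pochhammer (- real n) j = (-1)^j * real (n choose j) * fact j"
proof -
  assume "j \<le> n"
  have "pochhammer (- real n) j = (-1)^j * pochhammer (real n - real j + 1) j"
    by (rule pochhammer_minus)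
  also have "pochhammer (real n - real j + 1) j = (real n gchoose j) * fact j"
    by (subst gbinomial_pochhammer') simp
  also have "real n gchoose j = real (n choose j)" by (simp add: binomial_gbinomial)
  finally show ?thesis by simp
qed

lemma poch_pos_nat: "j \<le> n \<Longrightarrow> pochhammer (real a + real j + 1) (n - j) = real (n + a choose (n - j)) * fact (n - j)"
proof -
  assume j: "j \<le> n"
  have "real (n + a) - real (n - j) + 1 = real a + real j + 1" using j by simp
  hence "pochhammer (real a + real j + 1) (n - j) = (real (n + a) gchoose (n - j)) * fact (n - j)"
    by (subst gbinomial_pochhammer') simp
  thus ?thesis by (simp add: binomial_gbinomial)
qed

lemma laguerre_alt:
  "laguerre n (real a) x = (\<Sum>j=0..n. (-1)^j * real (n + a choose (n - j)) * x ^ j / fact j)"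
  unfolding laguerre_def sum_distrib_left
proof (rule sum.cong[OF refl])
  fix j assume "j \<in> {0..n}"
  hence j: "j \<le> n" by simp
  have f0: "(fact j * fact (n-j) * (n choose j) :: nat) = fact n" by (rule binomial_fact_lemma[OF j])
  have f: "fact n = real (n choose j) * fact j * fact (n - j)"
  proof -
    have "real (fact j * fact (n-j) * (n choose j)) = real (fact n)" using f0 by simp
    thus ?thesis by (simp add: mult_ac)
  qed
  show "1 / fact n * (pochhammer (- real n) j / fact j * pochhammer (real a + real j + 1) (n - j) * x ^ j) =
        (-1)^j * real (n + a choose (n - j)) * x ^ j / fact j"
    unfolding poch_neg_nat[OF j] poch_pos_nat[OF j] f
    using j by (simp add: field_simps)
qed

definition phi :: "real \<Rightarrow> complex fps" where
  "phi t = (fps_X + 2) * fps_exp (- of_real t)"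

lemma X2_pow_nth: "fps_nth ((fps_X + 2 :: complex fps) ^ n) i = of_nat (n choose i) * 2 ^ (n - i)"
proof (induction n arbitrary: i)
  case 0
  then show ?case by (cases i) auto
next
  case (Suc n)
  have "(fps_X + 2 :: complex fps) ^ Suc n = fps_X * (fps_X + 2) ^ n + 2 * (fps_X + 2) ^ n"
    by (simp add: algebra_simps)
  hence "fps_nth ((fps_X + 2 :: complex fps) ^ Suc n) i =
      fps_nth (fps_X * (fps_X + 2) ^ n) i + fps_nth (2 * (fps_X + 2) ^ n) i"
    by (simp only: fps_add_nth)
  also have "\<dots> = (if i = 0 then 0 else fps_nth ((fps_X + 2) ^ n) (i - 1)) + 2 * fps_nth ((fps_X + 2) ^ n) i"
    by (simp only: fps_X_mult_nth fps_mult_numeral_left)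
  also have "\<dots> = of_nat (Suc n choose i) * 2 ^ (Suc n - i)"
  proof (cases i)
    case 0
    then show ?thesis by (simp add: Suc.IH)
  next
    case (Suc i')
    show ?thesis
    proof (cases "i' \<le> n")
      case True
      hence e: "Suc n - i = Suc (n - Suc i')" if "i' < n" using Suc that by simp
      show ?thesis
      proof (cases "i' = n")
        case True
        then show ?thesis using Suc by (simp add: Suc.IH)
      next
        case False
        hence lt: "i' < n" using \<open>i' \<le> n\<close> by simp
        have "(n - i') = Suc (n - Suc i')" using lt by simp
        thus ?thesis using Suc lt by (simp add: Suc.IH e algebra_simps)
      qed
    next
      case False
      then show ?thesis using Suc by (simp add: Suc.IH)
    qed
  qed
  finally show ?case .
qed

lemma phi_pow: "phi t ^ n = (fps_X + 2) ^ n * fps_exp (of_nat n * (- of_real t))"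
  by (simp add: phi_def power_mult_distrib fps_exp_power_mult)

lemma phi_pow_nth:
  assumes "k \<le> n"
  shows "fps_nth (phi t ^ n) k = of_real (2 ^ (n - k) * laguerre k (real (n - k)) (2 * real n * t))"
proof -
  have "fps_nth (phi t ^ n) k = (\<Sum>i=0..k. of_nat (n choose i) * 2 ^ (n - i) * ((of_nat n * (- of_real t)) ^ (k - i) / of_nat (fact (k - i))))"
    by (simp add: phi_pow fps_mult_nth X2_pow_nth fps_exp_nth)
  also have "\<dots> = (\<Sum>j=0..k. of_nat (n choose (k - j)) * 2 ^ (n - (k - j)) * ((of_nat n * (- of_real t)) ^ j / of_nat (fact j)))"
    by (subst sum.atLeastAtMost_rev) (intro sum.cong refl, simp)
  also have "\<dots> = of_real (\<Sum>j=0..k. 2 ^ (n - k) * ((-1)^j * real (k + (n - k) choose (k - j)) * (2 * real n * t) ^ j / fact j))"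
    unfolding of_real_sum
  proof (intro sum.cong refl)
    fix j assume "j \<in> {0..k}"
    hence j: "j \<le> k" by simp
    have nk: "k + (n - k) = n" using assms by simp
    have p: "(2::complex) ^ (n - (k - j)) = 2 ^ (n - k) * 2 ^ j"
      using j assms by (simp flip: power_add)
    show "of_nat (n choose (k - j)) * 2 ^ (n - (k - j)) * ((of_nat n * (- of_real t)) ^ j / of_nat (fact j)) =
      complex_of_real (2 ^ (n - k) * ((-1)^j * real (k + (n - k) choose (k - j)) * (2 * real n * t) ^ j / fact j))"
      unfolding nk p by (simp add: power_mult_distrib power_minus' mult_ac)
  qed
  also have "\<dots> = of_real (2 ^ (n - k) * laguerre k (real (n - k)) (2 * real n * t))"
    by (simp add: laguerre_alt sum_distrib_left)
  finally show ?thesis .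
qed

lemma phi0: "fps_nth (phi t) 0 = 2"
  by (simp add: phi_def)

lemma lagr_phi: "lagr (phi t)"
  by unfold_locales (simp add: phi0)

lemma ring_key:
  fixes A A' E E' X c :: "'a::comm_ring_1"
  assumes h1: "A = X * ((A + 2) * E)"
    and h2: "A' = (A + 2) * E + X * (A' * E + (A + 2) * E')"
    and h3: "E' = - c * E * A'"
  shows "A' * (2 + c * A * (A + 2)) = (A + 2)^2 * E"
proof -
  have r1: "(A + 2) * ((A + 2) * E + X * (A' * E + (A + 2) * (- c * E * A'))) =
      (A + 2)^2 * E + (X * ((A + 2) * E)) * A' - c * (X * ((A + 2) * E)) * (A + 2) * A'"
    by (simp add: algebra_simps power2_eq_square)
  have "(A + 2) * A' = (A + 2) * ((A + 2) * E + X * (A' * E + (A + 2) * E'))"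
    by (rule arg_cong[where f="\<lambda>z. (A + 2) * z", OF h2])
  also have "\<dots> = (A + 2)^2 * E + A * A' - c * A * (A + 2) * A'"
    unfolding h3 r1 h1[symmetric] ..
  finally have e: "(A + 2) * A' = (A + 2)^2 * E + A * A' - c * A * (A + 2) * A'" .
  have "A' * (2 + c * A * (A + 2)) = (A + 2) * A' - A * A' + c * A * (A + 2) * A'"
    by (simp add: algebra_simps)
  also have "\<dots> = (A + 2)^2 * E" unfolding e by (simp add: algebra_simps)
  finally show ?thesis .
qed

lemma main_formal:
  fixes t :: real
  shows "lagr.A (phi t) ^ k * fps_deriv (lagr.A (phi t)) * inverse (phi t oo lagr.A (phi t)) * (2 + fps_const (of_real t) * lagr.A (phi t) * (lagr.A (phi t) + 2)) = lagr.A (phi t) ^ k * (lagr.A (phi t) + 2)"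
proof -
  define AA where "AA = lagr.A (phi t)"
  have A0': "fps_nth AA 0 = 0" unfolding AA_def by (rule lagr.A0[OF lagr_phi])
  define E where "E = fps_exp (- of_real t) oo AA"
  define c where "c = fps_const (of_real t :: complex)"
  have PA: "phi t oo AA = (AA + 2) * E"
  proof -
    have two: "(2::complex fps) = fps_const 2" by simp
    have "phi t oo AA = ((fps_X + fps_const 2) oo AA) * E"
      unfolding phi_def E_def two by (rule fps_compose_mult_distrib[OF A0'])
    also have "(fps_X + fps_const 2) oo AA = AA + fps_const 2"
      by (simp add: fps_compose_add_distrib fps_X_fps_compose_startby0[OF A0'] fps_const_compose)
    finally show ?thesis by simp
  qed
  have dE: "fps_deriv E = - c * E * fps_deriv AA"
    unfolding E_def c_def
    by (simp add: fps_compose_deriv[OF A0'] fps_exp_deriv fps_const_mult_apply_left[symmetric] mult_ac)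
  have h1: "AA = fps_X * ((AA + 2) * E)"
    using lagr.A_eq[OF lagr_phi, of t] unfolding AA_def[symmetric] PA .
  have h2: "fps_deriv AA = (AA + 2) * E + fps_X * (fps_deriv AA * E + (AA + 2) * fps_deriv E)"
  proof -
    have "fps_deriv AA = fps_deriv (fps_X * ((AA + 2) * E))" by (subst h1) (rule refl)
    also have "\<dots> = (AA + 2) * E + fps_X * (fps_deriv AA * E + (AA + 2) * fps_deriv E)"
      by (simp add: algebra_simps)
    finally show ?thesis .
  qed
  have key: "fps_deriv AA * (2 + c * AA * (AA + 2)) = (AA + 2)^2 * E"
    by (rule ring_key[OF h1 h2 dE])
  have inv1: "((AA + 2) * E) * inverse ((AA + 2) * E) = 1"
    using lagr.PhiA0[OF lagr_phi, of t] unfolding AA_def[symmetric] PA by (rule inverse_mult_eq_1')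
  have "AA ^ k * fps_deriv AA * inverse (phi t oo AA) * (2 + c * AA * (AA + 2)) =
        AA ^ k * (fps_deriv AA * (2 + c * AA * (AA + 2))) * inverse ((AA + 2) * E)"
    unfolding PA by (simp only: mult_ac)
  also have "\<dots> = AA ^ k * (AA + 2) * (((AA + 2) * E) * inverse ((AA + 2) * E))"
    unfolding key by (simp only: mult_ac power2_eq_square)
  also have "\<dots> = AA ^ k * (AA + 2)" unfolding inv1 by simp
  finally show ?thesis unfolding c_def AA_def .
qed

definition GF :: "real \<Rightarrow> nat \<Rightarrow> complex fps" where
  "GF x a = inverse ((1 - fps_X) ^ (a + 1)) * (fps_exp 1 oo (fps_X * (fps_const (of_real (- x)) * inverse (1 - fps_X))))"

lemma inv_pow_nth: "p > 0 \<Longrightarrow> fps_nth (inverse ((1 - fps_X) ^ p) :: complex fps) m = of_nat (p + m - 1 choose m)"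
  using one_minus_const_fps_X_neg_power'[of p "1::complex"] by simp

lemma GF_nth: "fps_nth (GF x a) n = of_real (laguerre n (real a) x)"
proof -
  define C :: "complex fps" where "C = inverse ((1 - fps_X) ^ (a + 1))"
  define H1 :: "complex fps" where "H1 = fps_const (of_real (- x)) * inverse (1 - fps_X)"
  define E :: "complex fps" where "E = fps_exp 1"
  have Hpow: "(fps_X * H1) ^ i = fps_X ^ i * H1 ^ i" for i by (simp add: power_mult_distrib)
  have z: "fps_nth ((fps_X * H1) ^ i) k = 0" if "k < i" for i k
    using that by (simp add: Hpow fps_X_power_mult_nth)
  have HC: "fps_nth ((fps_X * H1) ^ i * C) n = (if i \<le> n then of_real ((- x) ^ i) * of_nat (n + a choose (n - i)) else 0)" for i
  proof -
    define IV :: "complex fps" where "IV = inverse (1 - fps_X)"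
    have C': "C = IV ^ (a + 1)" unfolding C_def IV_def by (rule fps_inverse_power)
    have I': "inverse ((1 - fps_X) ^ (a + 1 + i)) = IV ^ (a + 1 + i)" unfolding IV_def by (rule fps_inverse_power)
    have "H1 ^ i * C = fps_const (of_real ((- x) ^ i)) * IV ^ (a + 1 + i)"
      unfolding H1_def C' IV_def[symmetric] by (simp add: power_mult_distrib fps_const_power power_add mult_ac)
    hence "H1 ^ i * C = fps_const (of_real ((- x) ^ i)) * inverse ((1 - fps_X) ^ (a + 1 + i))"
      unfolding I' .
    hence "(fps_X * H1) ^ i * C = fps_X ^ i * (fps_const (of_real ((- x) ^ i)) * inverse ((1 - fps_X) ^ (a + 1 + i)))"
      by (simp add: Hpow mult.assoc)
    hence eq: "(fps_X * H1) ^ i * C = fps_X ^ i * (fps_const (of_real ((- x) ^ i)) * inverse ((1 - fps_X) ^ (a + 1 + i)))" .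
    have pos: "a + 1 + i > 0" by simp
    show ?thesis
    proof (cases "i \<le> n")
      case True
      have e2: "a + 1 + i + (n - i) - 1 = n + a" using True by simp
      show ?thesis unfolding eq fps_X_power_mult_nth fps_mult_left_const_nth inv_pow_nth[OF pos] e2
        using True by simp
    next
      case False
      thus ?thesis unfolding eq fps_X_power_mult_nth by simp
    qed
  qed
  have "fps_nth (GF x a) n = fps_nth ((E oo (fps_X * H1)) * C) n"
    by (simp add: GF_def C_def H1_def E_def mult.commute)
  also have "\<dots> = (\<Sum>k=0..n. (\<Sum>i=0..k. fps_nth E i * fps_nth ((fps_X * H1) ^ i) k) * fps_nth C (n - k))"
    by (simp add: fps_mult_nth fps_compose_nth)
  also have "\<dots> = (\<Sum>k=0..n. \<Sum>i=0..n. fps_nth E i * fps_nth ((fps_X * H1) ^ i) k * fps_nth C (n - k))"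
  proof (intro sum.cong refl)
    fix k assume "k \<in> {0..n}"
    hence k: "k \<le> n" by simp
    have "(\<Sum>i=0..k. fps_nth E i * fps_nth ((fps_X * H1) ^ i) k) = (\<Sum>i=0..n. fps_nth E i * fps_nth ((fps_X * H1) ^ i) k)"
      by (rule sum.mono_neutral_left) (use k z in auto)
    thus "(\<Sum>i=0..k. fps_nth E i * fps_nth ((fps_X * H1) ^ i) k) * fps_nth C (n - k) =
        (\<Sum>i=0..n. fps_nth E i * fps_nth ((fps_X * H1) ^ i) k * fps_nth C (n - k))"
      by (simp add: sum_distrib_right)
  qed
  also have "\<dots> = (\<Sum>i=0..n. fps_nth E i * (\<Sum>k=0..n. fps_nth ((fps_X * H1) ^ i) k * fps_nth C (n - k)))"
    by (subst sum.swap) (simp add: sum_distrib_left mult.assoc)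
  also have "\<dots> = (\<Sum>i=0..n. fps_nth E i * fps_nth ((fps_X * H1) ^ i * C) n)"
    by (simp add: fps_mult_nth)
  also have "\<dots> = (\<Sum>i=0..n. of_real ((-1)^i * real (n + a choose (n - i)) * x ^ i / fact i))"
  proof (intro sum.cong refl)
    fix i assume "i \<in> {0..n}"
    hence i: "i \<le> n" by simp
    show "fps_nth E i * fps_nth ((fps_X * H1) ^ i * C) n = of_real ((-1)^i * real (n + a choose (n - i)) * x ^ i / fact i)"
      unfolding HC using i by (simp add: E_def fps_exp_nth power_minus' mult_ac)
  qed
  also have "\<dots> = of_real (laguerre n (real a) x)"
    by (simp add: laguerre_alt)
  finally show ?thesis .
qed

definition gf :: "real \<Rightarrow> nat \<Rightarrow> complex \<Rightarrow> complex" where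
  "gf x a z = inverse ((1 - z) ^ (a + 1)) * exp (z * (of_real (- x) * inverse (1 - z)))"

lemma gf_expansion: "gf x a has_fps_expansion GF x a"
proof -
  have one: "(\<lambda>z::complex. 1 - z) has_fps_expansion 1 - fps_X"
    by (intro has_fps_expansion_diff has_fps_expansion_fps_X) (use has_fps_expansion_const[of 1] in simp)
  have inv1: "(\<lambda>z::complex. inverse (1 - z)) has_fps_expansion inverse (1 - fps_X)"
    by (rule has_fps_expansion_inverse[OF one]) simp
  have p: "(\<lambda>z::complex. inverse ((1 - z) ^ (a + 1))) has_fps_expansion inverse ((1 - fps_X) ^ (a + 1))"
    by (rule has_fps_expansion_inverse[OF has_fps_expansion_power[OF one]]) simp
  have h: "(\<lambda>z::complex. z * (of_real (- x) * inverse (1 - z))) has_fps_expansion fps_X * (fps_const (of_real (- x)) * inverse (1 - fps_X))"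
    by (intro has_fps_expansion_mult has_fps_expansion_fps_X has_fps_expansion_const inv1)
  have e: "(exp \<circ> (\<lambda>z::complex. z * (of_real (- x) * inverse (1 - z)))) has_fps_expansion
      (fps_exp 1 oo (fps_X * (fps_const (of_real (- x)) * inverse (1 - fps_X))))"
    by (rule has_fps_expansion_compose[OF has_fps_expansion_exp1 h]) simp
  show ?thesis
    unfolding gf_def[abs_def] GF_def using has_fps_expansion_mult[OF p e] by (simp add: o_def)
qed

lemma gf_holo: "gf x a holomorphic_on ball 0 1"
proof -
  have "1 - z \<noteq> 0" if "z \<in> ball 0 1" for z :: complex
    using that by (auto simp: dist_norm)
  thus ?thesis unfolding gf_def[abs_def] by (intro holomorphic_intros) auto
qed

lemma re_bound:
  fixes z :: complex
  assumes "norm z = r" "r < 1" "0 \<le> r"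
  shows "Re (z / (1 - z)) \<ge> - r / (1 + r)"
proof -
  define a where "a = Re z"
  define b where "b = Im z"
  have ab: "a^2 + b^2 = r^2" using assms(1) unfolding a_def b_def by (metis cmod_power2)
  have ar: "\<bar>a\<bar> \<le> r" using assms(1) abs_Re_le_cmod unfolding a_def by blast
  have den: "(1 - a)^2 + b^2 > 0" using ar assms by (smt (verit) power2_less_0 zero_less_power2)
  have "Re (z / (1 - z)) = (a * (1 - a) + b * (- b)) / ((1 - a)^2 + (- b)^2)"
    by (simp add: Re_divide a_def b_def)
  also have "\<dots> = (a - r^2) / ((1 - a)^2 + b^2)" using ab by (simp add: algebra_simps power2_eq_square)
  also have "\<dots> \<ge> - r / (1 + r)"
  proof -
    have "(1 - a)^2 + b^2 = 1 - 2 * a + r^2" using ab by (simp add: algebra_simps power2_eq_square)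
    moreover have "(a - r^2) * (1 + r) \<ge> - r * (1 - 2 * a + r^2)"
    proof -
      have "(a - r^2) * (1 + r) + r * (1 - 2 * a + r^2) = (1 - r) * (a + r)" by (simp add: algebra_simps power2_eq_square)
      moreover have "(1 - r) * (a + r) \<ge> 0" using ar assms by (intro mult_nonneg_nonneg) auto
      ultimately show ?thesis by linarith
    qed
    ultimately show ?thesis using den assms by (simp add: divide_simps)
  qed
  finally show ?thesis .
qed

lemma gf_bound:
  assumes "norm z = r" "r < 1" "0 < r" "x \<ge> 0"
  shows "norm (gf x a z) \<le> exp (x * r / (1 + r)) / (1 - r) ^ (a + 1)"
proof -
  have n1: "norm (1 - z) \<ge> 1 - r" using assms norm_triangle_ineq2[of 1 z] by (simp add: norm_minus_commute)
  have "norm (inverse ((1 - z) ^ (a + 1))) = inverse (norm (1 - z) ^ (a + 1))"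
    by (simp only: norm_inverse norm_power)
  also have "\<dots> \<le> inverse ((1 - r) ^ (a + 1))"
    using n1 assms by (intro le_imp_inverse_le power_mono) auto
  finally have i: "norm (inverse ((1 - z) ^ (a + 1))) \<le> inverse ((1 - r) ^ (a + 1))" .
  have "Re (z * (of_real (- x) * inverse (1 - z))) = - x * Re (z / (1 - z))"
  proof -
    define w where "w = z / (1 - z)"
    have "z * (of_real (- x) * inverse (1 - z)) = of_real (- x) * w"
      unfolding w_def by (simp add: divide_inverse mult_ac)
    hence "Re (z * (of_real (- x) * inverse (1 - z))) = Re (of_real (- x) * w)" by (rule arg_cong)
    also have "\<dots> = - x * Re w" by simp
    finally show ?thesis unfolding w_def .
  qed
  also have "\<dots> \<le> - x * (- r / (1 + r))"
    using re_bound[OF assms(1,2)] assms by (intro mult_left_mono_neg) auto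
  finally have re: "Re (z * (of_real (- x) * inverse (1 - z))) \<le> x * r / (1 + r)" by simp
  have "norm (gf x a z) = norm (inverse ((1 - z) ^ (a + 1))) * exp (Re (z * (of_real (- x) * inverse (1 - z))))"
    by (simp add: gf_def norm_mult norm_exp_eq_Re)
  also have "\<dots> \<le> inverse ((1 - r) ^ (a + 1)) * exp (x * r / (1 + r))"
    using i re assms by (intro mult_mono) auto
  finally show ?thesis by (simp add: divide_inverse mult_ac)
qed

lemma laguerre_bound:
  assumes "x \<ge> 0" "0 < r" "r < 1"
  shows "\<bar>laguerre n (real a) x\<bar> \<le> exp (x * r / (1 + r)) / (1 - r) ^ (a + 1) / r ^ n"
proof -
  have "\<bar>laguerre n (real a) x\<bar> = norm (fps_nth (GF x a) n)"
    by (simp add: GF_nth)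
  also have "\<dots> = norm ((deriv ^^ n) (gf x a) 0) / fact n"
    by (simp add: fps_nth_fps_expansion[OF gf_expansion] norm_divide)
  also have "norm ((deriv ^^ n) (gf x a) 0) \<le> fact n * (exp (x * r / (1 + r)) / (1 - r) ^ (a + 1)) / r ^ n"
  proof (rule Cauchy_inequality)
    show "gf x a holomorphic_on ball 0 r"
      by (rule holomorphic_on_subset[OF gf_holo]) (use assms in auto)
    show "continuous_on (cball 0 r) (gf x a)"
      by (rule holomorphic_on_imp_continuous_on, rule holomorphic_on_subset[OF gf_holo]) (use assms in auto)
    show "0 < r" by fact
    show "norm (gf x a w) \<le> exp (x * r / (1 + r)) / (1 - r) ^ (a + 1)" if "norm (0 - w) = r" for w
      using gf_bound[of w r x a] that assms by simp
  qed
  hence "norm ((deriv ^^ n) (gf x a) 0) / fact n \<le> (fact n * (exp (x * r / (1 + r)) / (1 - r) ^ (a + 1)) / r ^ n) / fact n"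
    by (rule divide_right_mono) simp
  also have "\<dots> = exp (x * r / (1 + r)) / (1 - r) ^ (a + 1) / r ^ n"
    by simp
  finally show ?thesis .
qed

definition AA :: "real \<Rightarrow> complex fps" where "AA t = lagr.A (phi t)"
definition BB :: "real \<Rightarrow> nat \<Rightarrow> complex fps" where
  "BB t k = AA t ^ k * fps_deriv (AA t) * inverse (phi t oo AA t)"

lemma AA_nth: "fps_nth (AA t) n = (if n = 0 then 0 else of_real (2 / real n * laguerre (n - 1) 1 (2 * real n * t)))"
proof (cases "n = 0")
  case True
  then show ?thesis unfolding AA_def using lagr.A0[OF lagr_phi] by simp
next
  case False
  hence n1: "n \<ge> 1" by simp
  have "of_nat n * fps_nth (AA t) n = fps_nth (phi t ^ n) (n - 1)"
    unfolding AA_def by (rule lagr.coeff_A[OF lagr_phi n1])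
  also have "\<dots> = of_real (2 ^ (n - (n - 1)) * laguerre (n - 1) (real (n - (n - 1))) (2 * real n * t))"
    by (rule phi_pow_nth) simp
  also have "n - (n - 1) = 1" using n1 by simp
  finally have "of_nat n * fps_nth (AA t) n = of_real (2 * laguerre (n - 1) 1 (2 * real n * t))" by simp
  hence "fps_nth (AA t) n = of_real (2 * laguerre (n - 1) 1 (2 * real n * t)) / of_nat n"
    using False by (simp add: field_simps)
  thus ?thesis using False by (simp add: field_simps)
qed

lemma BB_nth: "fps_nth (BB t k) j = (if k \<le> j then of_real (2 ^ k * laguerre (j - k) (real k) (2 * real j * t)) else 0)"
proof -
  have "fps_nth (BB t k) j = (if k \<le> j then fps_nth (phi t ^ j) (j - k) else 0)"
    unfolding BB_def AA_def by (rule lagr.coeff_B[OF lagr_phi])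
  also have "\<dots> = (if k \<le> j then of_real (2 ^ k * laguerre (j - k) (real k) (2 * real j * t)) else 0)"
  proof (cases "k \<le> j")
    case True
    have "j - (j - k) = k" using True by simp
    thus ?thesis using True phi_pow_nth[of "j - k" j t] by simp
  qed simp
  finally show ?thesis .
qed

lemma BB_identity:
  "BB t k * (2 + fps_const (of_real t) * AA t * (AA t + 2)) = AA t ^ k * (AA t + 2)"
  unfolding BB_def AA_def by (rule main_formal)

lemma lag_summable:
  assumes t: "t > 0" and rho: "0 \<le> \<rho>" "\<rho> < 1"
  shows "summable (\<lambda>j. \<bar>laguerre (j - k) (real k) (2 * real j * t)\<bar> * (exp (- t) * \<rho>) ^ j)"
proof -
  define r where "r = (1 + \<rho>) / 2"
  have r: "0 < r" "r < 1" "\<rho> < r" using rho by (auto simp: r_def)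
  define C where "C = r ^ k / (1 - r) ^ (k + 1)"
  have gs: "summable (\<lambda>j. C * (\<rho> / r) ^ j)"
    using r rho by (intro summable_mult summable_geometric) auto
  show ?thesis
  proof (rule summable_comparison_test'[OF gs])
    fix j assume "j \<ge> k"
    have x0: "2 * real j * t \<ge> 0" using t by simp
    have lb: "\<bar>laguerre (j - k) (real k) (2 * real j * t)\<bar> \<le>
        exp (2 * real j * t * r / (1 + r)) / (1 - r) ^ (k + 1) / r ^ (j - k)"
      by (rule laguerre_bound[OF x0 r(1,2)])
    have e1: "exp (2 * real j * t * r / (1 + r)) \<le> exp (real j * t)"
    proof -
      have "2 * r / (1 + r) \<le> 1" using r by (simp add: divide_simps)
      hence "real j * t * (2 * r / (1 + r)) \<le> real j * t * 1"
        using t by (intro mult_left_mono) auto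
      thus ?thesis by (simp add: mult_ac)
    qed
    have rj: "r ^ (j - k) = r ^ j / r ^ k" using \<open>j \<ge> k\<close> r by (simp add: power_diff)
    have "\<bar>laguerre (j - k) (real k) (2 * real j * t)\<bar> \<le> exp (real j * t) * C / r ^ j"
    proof -
      have "exp (2 * real j * t * r / (1 + r)) / (1 - r) ^ (k + 1) / r ^ (j - k) \<le>
            exp (real j * t) / (1 - r) ^ (k + 1) / r ^ (j - k)"
        using e1 r by (intro divide_right_mono) auto
      also have "\<dots> = exp (real j * t) * C / r ^ j"
        unfolding rj C_def using r by (simp add: field_simps)
      finally show ?thesis using lb by linarith
    qed
    hence "\<bar>laguerre (j - k) (real k) (2 * real j * t)\<bar> * (exp (- t) * \<rho>) ^ j \<le>
           exp (real j * t) * C / r ^ j * (exp (- t) * \<rho>) ^ j"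
      using rho by (intro mult_right_mono) auto
    also have "\<dots> = C * (\<rho> / r) ^ j"
    proof -
      have "exp (real j * t) * exp (- t) ^ j = 1"
        by (simp add: exp_of_nat_mult[symmetric] exp_add[symmetric])
      thus ?thesis by (simp add: power_mult_distrib power_divide field_simps)
    qed
    finally show "norm (\<bar>laguerre (j - k) (real k) (2 * real j * t)\<bar> * (exp (- t) * \<rho>) ^ j) \<le> C * (\<rho> / r) ^ j"
      using rho by simp
  qed
qed

lemma AA_summable_abs:
  assumes "t > 0" "0 \<le> \<rho>" "\<rho> < 1"
  shows "summable (\<lambda>n. norm (fps_nth (AA t) n * of_real (exp (- t) * \<rho>) ^ n))"
proof (rule summable_comparison_test'[OF summable_mult[OF lag_summable[OF assms, of 1], of 2]])
  fix n :: nat assume "n \<ge> 1"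
  have eq: "fps_nth (AA t) n * of_real (exp (- t) * \<rho>) ^ n =
      of_real (2 / real n * laguerre (n - 1) 1 (2 * real n * t) * (exp (- t) * \<rho>) ^ n)"
    using \<open>n \<ge> 1\<close> by (simp add: AA_nth)
  have "norm (fps_nth (AA t) n * of_real (exp (- t) * \<rho>) ^ n) =
        2 / real n * \<bar>laguerre (n - 1) 1 (2 * real n * t)\<bar> * (exp (- t) * \<rho>) ^ n"
    unfolding eq norm_of_real using assms by (simp add: abs_mult)
  also have "\<dots> \<le> 2 * (\<bar>laguerre (n - 1) 1 (2 * real n * t)\<bar> * (exp (- t) * \<rho>) ^ n)"
  proof -
    have le2: "2 / real n \<le> 2" using \<open>n \<ge> 1\<close> by (simp add: divide_simps)
    have X0: "0 \<le> \<bar>laguerre (n - 1) 1 (2 * real n * t)\<bar> * (exp (- t) * \<rho>) ^ n" using assms by simp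
    from mult_right_mono[OF le2 X0] show ?thesis by (simp only: mult.assoc)
  qed
  finally show "norm (norm (fps_nth (AA t) n * of_real (exp (- t) * \<rho>) ^ n)) \<le>
      2 * (\<bar>laguerre (n - 1) (real 1) (2 * real n * t)\<bar> * (exp (- t) * \<rho>) ^ n)" by simp
qed

lemma BB_summable_abs:
  assumes "t > 0" "0 \<le> \<rho>" "\<rho> < 1"
  shows "summable (\<lambda>n. norm (fps_nth (BB t k) n * of_real (exp (- t) * \<rho>) ^ n))"
proof (rule summable_comparison_test'[OF summable_mult[OF lag_summable[OF assms, of k], of "2 ^ k"]])
  fix n :: nat assume "n \<ge> k"
  show "norm (norm (fps_nth (BB t k) n * of_real (exp (- t) * \<rho>) ^ n)) \<le>
      2 ^ k * (\<bar>laguerre (n - k) (real k) (2 * real n * t)\<bar> * (exp (- t) * \<rho>) ^ n)"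
    using \<open>n \<ge> k\<close> assms by (simp add: BB_nth norm_mult norm_power abs_mult)
qed

lemma radius_ge:
  assumes "summable (\<lambda>n. norm (fps_nth F n * of_real s ^ n))" "s \<ge> 0"
  shows "ereal s \<le> fps_conv_radius (F :: complex fps)"
proof -
  have "ereal (norm (of_real s :: complex)) \<le> conv_radius (fps_nth F)"
    by (rule conv_radius_geI) (rule summable_norm_cancel[OF assms(1)])
  thus ?thesis using assms(2) by (simp add: fps_conv_radius_def)
qed

lemma rad_AB:
  fixes y :: complex
  assumes "t > 0" "norm y < 1"
  shows "ereal (norm (of_real (exp (- t)) * y)) < fps_conv_radius (AA t)"
    and "ereal (norm (of_real (exp (- t)) * y)) < fps_conv_radius (BB t k)"
proof -
  define \<rho> where "\<rho> = (1 + norm y) / 2"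
  have \<rho>: "0 \<le> \<rho>" "\<rho> < 1" "norm y < \<rho>" using assms by (auto simp: \<rho>_def)
  have lt: "norm (of_real (exp (- t)) * y) < exp (- t) * \<rho>"
    using \<rho> by (simp add: norm_mult)
  have lt': "ereal (norm (of_real (exp (- t)) * y)) < ereal (exp (- t) * \<rho>)" using lt by simp
  have "ereal (exp (- t) * \<rho>) \<le> fps_conv_radius (AA t)"
    by (rule radius_ge[OF AA_summable_abs[OF assms(1) \<rho>(1,2)]]) (use \<rho> in simp)
  thus "ereal (norm (of_real (exp (- t)) * y)) < fps_conv_radius (AA t)"
    by (rule order_less_le_trans[OF lt'])
  have "ereal (exp (- t) * \<rho>) \<le> fps_conv_radius (BB t k)"
    by (rule radius_ge[OF BB_summable_abs[OF assms(1) \<rho>(1,2)]]) (use \<rho> in simp)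
  thus "ereal (norm (of_real (exp (- t)) * y)) < fps_conv_radius (BB t k)"
    by (rule order_less_le_trans[OF lt'])
qed

lemma rad_add: "ereal r < fps_conv_radius f \<Longrightarrow> ereal r < fps_conv_radius g \<Longrightarrow> ereal r < fps_conv_radius (f + g)"
  using fps_conv_radius_add[of f g] by (meson min_less_iff_conj order_less_le_trans)

lemma rad_mult: "ereal r < fps_conv_radius f \<Longrightarrow> ereal r < fps_conv_radius g \<Longrightarrow> ereal r < fps_conv_radius (f * (g :: complex fps))"
  using fps_conv_radius_mult[of f g] by (meson min_less_iff_conj order_less_le_trans)

lemma rad_pow: "ereal r < fps_conv_radius f \<Longrightarrow> ereal r < fps_conv_radius (f ^ n :: complex fps)"
  using fps_conv_radius_power[of f n] by (meson order_less_le_trans)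

lemma final_alg:
  fixes eA eB K S :: complex and t :: real
  assumes K: "K = 1 + eA" and B: "eB = 2 ^ (m + 1) * S"
    and I: "eB * (2 + of_real t * eA * (eA + 2)) = eA ^ (m + 1) * (eA + 2)"
  shows "2 ^ (m + 1) * S = (K\<^sup>2 - 1) / (of_real t * K\<^sup>2 + of_real (2 - t)) * (K - 1) ^ m"
proof -
  have d: "of_real t * K\<^sup>2 + of_real (2 - t) = 2 + of_real t * eA * (eA + 2)"
    unfolding K by (simp add: algebra_simps power2_eq_square)
  have k2: "K\<^sup>2 - 1 = eA * (eA + 2)" unfolding K by (simp add: algebra_simps power2_eq_square)
  have k1: "K - 1 = eA" unfolding K by simp
  have dnz: "2 + of_real t * eA * (eA + 2) \<noteq> 0"
  proof
    assume d0: "2 + of_real t * eA * (eA + 2) = 0"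
    hence "eA ^ (m + 1) * (eA + 2) = 0" using I by simp
    hence "eA = 0 \<or> eA + 2 = 0" by auto
    hence "2 + of_real t * eA * (eA + 2) = 2" by auto
    with d0 show False by simp
  qed
  have "2 ^ (m + 1) * S = eA ^ (m + 1) * (eA + 2) / (2 + of_real t * eA * (eA + 2))"
    using I dnz B by (simp add: field_simps)
  also have "\<dots> = (K\<^sup>2 - 1) / (of_real t * K\<^sup>2 + of_real (2 - t)) * (K - 1) ^ m"
    unfolding d k2 k1 by (simp add: field_simps)
  finally show ?thesis .
qed

theorem mainTheorem6:
  fixes t :: real and m :: nat and y :: complex
  assumes "t > 0" and "m \<ge> 1" and "norm y < 1"
  shows "summable (\<lambda>j. if m + 1 \<le> j then
             of_real (laguerre (j - m - 1) (real (m + 1)) (2 * real j * t)) * (of_real (exp (- t)) * y) ^ j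
           else 0)
    \<and> 2 ^ (m + 1) * (\<Sum>j. if m + 1 \<le> j then
             of_real (laguerre (j - m - 1) (real (m + 1)) (2 * real j * t)) * (of_real (exp (- t)) * y) ^ j
           else 0)
      = ((K2t t y)\<^sup>2 - 1) / (of_real t * (K2t t y)\<^sup>2 + of_real (2 - t)) * (K2t t y - 1) ^ m"
proof -
  define k where "k = m + 1"
  define u where "u = of_real (exp (- t)) * y"
  define f where "f = (\<lambda>j. if m + 1 \<le> j then
             of_real (laguerre (j - m - 1) (real (m + 1)) (2 * real j * t)) * (of_real (exp (- t)) * y) ^ j
           else (0::complex))"
  define eA where "eA = eval_fps (AA t) u"
  define eB where "eB = eval_fps (BB t k) u"
  have rA: "ereal (norm u) < fps_conv_radius (AA t)"
    unfolding u_def by (rule rad_AB(1)[OF assms(1,3)])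
  have rB: "ereal (norm u) < fps_conv_radius (BB t k)"
    unfolding u_def by (rule rad_AB(2)[OF assms(1,3)])
  have fB: "fps_nth (BB t k) j * u ^ j = 2 ^ k * f j" for j
  proof (cases "k \<le> j")
    case True
    have "j - m - 1 = j - k" unfolding k_def by simp
    thus ?thesis using True unfolding f_def u_def k_def by (simp add: BB_nth)
  next
    case False
    thus ?thesis unfolding f_def k_def by (simp add: BB_nth)
  qed
  have sB: "(\<lambda>j. fps_nth (BB t k) j * u ^ j) sums eB"
    unfolding eB_def by (rule sums_eval_fps[OF rB])
  hence "(\<lambda>j. 2 ^ k * f j) sums eB" unfolding fB .
  hence "(\<lambda>j. (1 / 2 ^ k) * (2 ^ k * f j)) sums ((1 / 2 ^ k) * eB)" by (rule sums_mult)
  hence sf: "f sums (eB / 2 ^ k)" by simp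
  have summ: "summable f" using sf by (rule sums_summable)
  have Bsum: "eB = 2 ^ (m + 1) * suminf f"
    using sums_unique[OF sf] unfolding k_def by (simp add: field_simps)
  define h where "h = (\<lambda>n. if n = 0 then 0 else
       of_real (1 / real n * exp (- real n * t) * laguerre (n - 1) 1 (2 * real n * t)) * y ^ n)"
  have fA: "fps_nth (AA t) n * u ^ n = 2 * h n" for n
  proof (cases "n = 0")
    case False
    have e0: "exp (- (t * real n)) = exp (- t) ^ n"
    proof -
      have "exp (- (t * real n)) = exp (real n * (- t))" by simp
      also have "\<dots> = exp (- t) ^ n" by (rule exp_of_nat_mult)
      finally show ?thesis .
    qed
    have e: "complex_of_real (exp (- t)) ^ n = complex_of_real (exp (- (t * real n)))"
      unfolding e0 by simp
    show ?thesis using False unfolding h_def u_def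
      by (simp add: AA_nth e power_mult_distrib field_simps)
  qed (simp add: h_def AA_nth)
  have sA: "(\<lambda>n. fps_nth (AA t) n * u ^ n) sums eA"
    unfolding eA_def by (rule sums_eval_fps[OF rA])
  hence "(\<lambda>n. 2 * h n) sums eA" unfolding fA .
  hence "(\<lambda>n. (1 / 2) * (2 * h n)) sums ((1 / 2) * eA)" by (rule sums_mult)
  hence sh: "h sums (eA / 2)" by simp
  have K: "K2t t y = 1 + eA"
    unfolding K2t_def h_def[symmetric] using sums_unique[OF sh] by simp
  have r2: "ereal (norm u) < fps_conv_radius (2 :: complex fps)" by simp
  have rc: "ereal (norm u) < fps_conv_radius (fps_const (of_real t) :: complex fps)" by simp
  have rA2: "ereal (norm u) < fps_conv_radius (AA t + 2)" by (rule rad_add[OF rA r2])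
  have rP: "ereal (norm u) < fps_conv_radius (fps_const (of_real t) * AA t * (AA t + 2))"
    by (intro rad_mult rc rA rA2)
  have rD: "ereal (norm u) < fps_conv_radius (2 + fps_const (of_real t) * AA t * (AA t + 2))"
    by (rule rad_add[OF r2 rP])
  have "eval_fps (BB t k * (2 + fps_const (of_real t) * AA t * (AA t + 2))) u =
        eval_fps (AA t ^ k * (AA t + 2)) u"
    by (simp only: BB_identity)
  moreover have "eval_fps (BB t k * (2 + fps_const (of_real t) * AA t * (AA t + 2))) u =
        eB * (2 + of_real t * eA * (eA + 2))"
    using rA rB rA2 rP rD r2 rc rad_mult[OF rc rA] unfolding eA_def eB_def
    by (simp add: eval_fps_mult eval_fps_add)
  moreover have "eval_fps (AA t ^ k * (AA t + 2)) u = eA ^ (m + 1) * (eA + 2)"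
    unfolding eA_def k_def[symmetric]
    by (simp only: eval_fps_mult[OF rad_pow[OF rA] rA2] eval_fps_power[OF rA] eval_fps_add[OF rA r2] eval_fps_numeral)
  ultimately have I: "eB * (2 + of_real t * eA * (eA + 2)) = eA ^ (m + 1) * (eA + 2)" by simp
  have main: "2 ^ (m + 1) * suminf f = ((K2t t y)\<^sup>2 - 1) / (of_real t * (K2t t y)\<^sup>2 + of_real (2 - t)) * (K2t t y - 1) ^ m"
    by (rule final_alg[OF K Bsum I])
  show ?thesis using summ main unfolding f_def by blast
qed

end
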